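(* Let $\mathbb{Z}_{(p_n)}$ be an odometer with scale $(p_n)$. Then $\operatorname{Aut}^{(\infty)}(\mathbb{Z}_{(p_n)},+\mathbf{1})$ is isomorphic to the direct limit of a sequence $$\mathbb{Z}_{(p_n)}\xrightarrow{j_0}\mathbb{Z}_{(p_{n+1}/p_1)}^{p_1}\rtimes\operatorname{Sym}(p_1)\xrightarrow{j_1}\mathbb{Z}_{(p_{n+2}/p_2)}^{p_2}\rtimes\operatorname{Sym}(p_2)\xrightarrow{j_2}\mathbb{Z}_{(p_{n+3}/p_3)}^{p_3}\rtimes\operatorname{Sym}(p_3)\xrightarrow{j_3}\cdots$$ where the maps $j_k$ are injective group homomorphisms.
   Context: A scale is a sequence $(p_n)$ of positive integers with $p_n\mid p_{n+1}$, not eventually constant. The odometer is $\mathbb{Z}_{(p_n)}=\{(x_n)\in\prod_n\mathbb{Z}/p_n\mathbb{Z}: x_{n+1}\equiv x_n\bmod p_n\}$ with translation by $\mathbf{1}=(1,1,\dots)$; $\mathbb{Z}_{(p_{n+k}/p_k)}$ denotes the odometer with scale $(p_{n+k}/p_k)_{n\ge1}$. $\operatorname{Aut}(X,T)$ is the group of homeomorphisms commuting with $T$ and $\operatorname{Aut}^{(\infty)}(X,T)=\bigcup_{n\ge1}\operatorname{Aut}(X,T^n)\subseteq\operatorname{Homeo}(X)$. In $H^{p}\rtimes\operatorname{Sym}(p)$ the symmetric group acts by permuting coordinates. *)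

theory Defs
  imports "HOL-Analysis.Analysis" "HOL-Algebra.Group"
begin

text \<open>Scales. The paper's scale (p_1, p_2, ...) is represented 0-based:
  Isabelle's p i stands for p_(i+1). The convention p_0 = 1 is used for the
  zeroth term of the direct system.\<close>

definition is_scale :: "(nat \<Rightarrow> nat) \<Rightarrow> bool" where
  "is_scale p \<longleftrightarrow> (\<forall>n. 0 < p n) \<and> (\<forall>n. p n dvd p (Suc n)) \<and>
     \<not> (\<exists>N. \<forall>n\<ge>N. p n = p N)"

text \<open>The odometer Z_(q): compatible sequences x with x n in Z/(q n)Z.\<close>

definition odo :: "(nat \<Rightarrow> nat) \<Rightarrow> (nat \<Rightarrow> nat) set" where
  "odo q = {x. \<forall>n. x n < q n \<and> x (Suc n) mod q n = x n}"

definition odo_top :: "(nat \<Rightarrow> nat) \<Rightarrow> (nat \<Rightarrow> nat) topology" where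
  "odo_top q = subtopology (product_topology (\<lambda>n. discrete_topology {..<q n}) UNIV) (odo q)"

definition odo_T :: "(nat \<Rightarrow> nat) \<Rightarrow> (nat \<Rightarrow> nat) \<Rightarrow> (nat \<Rightarrow> nat)" where
  "odo_T q x = (\<lambda>n. (x n + 1) mod q n)"

text \<open>The group Aut^(infinity)(Z_(q), +1) = union over m \<ge> 1 of Aut(Z_(q), T^m),
  as a subgroup of Homeo(Z_(q)) under composition. Maps are taken extensional
  (undefined outside the odometer).\<close>

definition aut_inf :: "(nat \<Rightarrow> nat) \<Rightarrow> ((nat \<Rightarrow> nat) \<Rightarrow> (nat \<Rightarrow> nat)) monoid" where
  "aut_inf q = \<lparr> carrier = {f \<in> extensional (odo q).
        homeomorphic_map (odo_top q) (odo_top q) f \<and>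
        (\<exists>m\<ge>1. \<forall>x\<in>odo q. f ((odo_T q ^^ m) x) = (odo_T q ^^ m) (f x))},
      mult = (\<lambda>f g. compose (odo q) f g),
      one = restrict id (odo q) \<rparr>"

definition odo_add :: "(nat \<Rightarrow> nat) \<Rightarrow> (nat \<Rightarrow> nat) \<Rightarrow> (nat \<Rightarrow> nat) \<Rightarrow> (nat \<Rightarrow> nat)" where
  "odo_add q x y = (\<lambda>n. (x n + y n) mod q n)"

definition odo_grp :: "(nat \<Rightarrow> nat) \<Rightarrow> (nat \<Rightarrow> nat) monoid" where
  "odo_grp q = \<lparr> carrier = odo q, mult = odo_add q, one = (\<lambda>n. 0) \<rparr>"

text \<open>The semidirect product Z_(q)^m \<rtimes> Sym(m), Sym(m) permuting the m
  coordinates (indexed by {..<m}):  (v,s)(w,t) = (v + s.w, s o t),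
  where (s.w)_i = w_(s^-1 i).\<close>

definition wr_grp :: "(nat \<Rightarrow> nat) \<Rightarrow> nat \<Rightarrow> ((nat \<Rightarrow> nat \<Rightarrow> nat) \<times> (nat \<Rightarrow> nat)) monoid" where
  "wr_grp q m = \<lparr> carrier = {(v, s). v \<in> {..<m} \<rightarrow>\<^sub>E odo q \<and> s permutes {..<m}},
      mult = (\<lambda>(v, s) (w, t). (\<lambda>i\<in>{..<m}. odo_add q (v i) (w (inv_into UNIV s i)), s \<circ> t)),
      one = (\<lambda>i\<in>{..<m}. (\<lambda>n. 0), id) \<rparr>"

text \<open>Copies of groups inside a sum type, so that all groups of the direct
  system live on one type.\<close>

definition inl_grp :: "'a monoid \<Rightarrow> ('a + 'b) monoid" where
  "inl_grp G = \<lparr> carrier = Inl ` carrier G,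
      mult = (\<lambda>a b. Inl (projl a \<otimes>\<^bsub>G\<^esub> projl b)), one = Inl \<one>\<^bsub>G\<^esub> \<rparr>"

definition inr_grp :: "'b monoid \<Rightarrow> ('a + 'b) monoid" where
  "inr_grp G = \<lparr> carrier = Inr ` carrier G,
      mult = (\<lambda>a b. Inr (projr a \<otimes>\<^bsub>G\<^esub> projr b)), one = Inr \<one>\<^bsub>G\<^esub> \<rparr>"

text \<open>The groups of the direct system: term 0 is Z_(p_n); term k \<ge> 1 is
  Z_(p_(n+k)/p_k)^(p_k) \<rtimes> Sym(p_k). In 0-based indexing p_k = p (k-1) and
  the shifted scale is i \<mapsto> p (i+k) div p (k-1).\<close>

definition shift_scale :: "(nat \<Rightarrow> nat) \<Rightarrow> nat \<Rightarrow> (nat \<Rightarrow> nat)" where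
  "shift_scale p k = (\<lambda>i. p (i + k) div p (k - 1))"

definition seq_grp :: "(nat \<Rightarrow> nat) \<Rightarrow> nat \<Rightarrow>
    ((nat \<Rightarrow> nat) + ((nat \<Rightarrow> nat \<Rightarrow> nat) \<times> (nat \<Rightarrow> nat))) monoid" where
  "seq_grp p k = (if k = 0 then inl_grp (odo_grp p)
                  else inr_grp (wr_grp (shift_scale p k) (p (k - 1))))"

primrec dl_map :: "(nat \<Rightarrow> 'a \<Rightarrow> 'a) \<Rightarrow> nat \<Rightarrow> nat \<Rightarrow> 'a \<Rightarrow> 'a" where
  "dl_map j k 0 = id"
| "dl_map j k (Suc d) = j (k + d) \<circ> dl_map j k d"

definition dl_rel :: "(nat \<Rightarrow> 'a monoid) \<Rightarrow> (nat \<Rightarrow> 'a \<Rightarrow> 'a) \<Rightarrow> ((nat \<times> 'a) \<times> (nat \<times> 'a)) set" where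
  "dl_rel G j = {((k, x), (l, y)). x \<in> carrier (G k) \<and> y \<in> carrier (G l) \<and>
      (\<exists>m. k \<le> m \<and> l \<le> m \<and> dl_map j k (m - k) x = dl_map j l (m - l) y)}"

definition dirlim :: "(nat \<Rightarrow> 'a monoid) \<Rightarrow> (nat \<Rightarrow> 'a \<Rightarrow> 'a) \<Rightarrow> (nat \<times> 'a) set monoid" where
  "dirlim G j = \<lparr> carrier = (SIGMA k:UNIV. carrier (G k)) // dl_rel G j,
      mult = (\<lambda>A B. let (k, x) = (SOME a. a \<in> A); (l, y) = (SOME b. b \<in> B); m = max k l
                    in dl_rel G j `` {(m, dl_map j k (m - k) x \<otimes>\<^bsub>G m\<^esub> dl_map j l (m - l) y)}),
      one = dl_rel G j `` {(0, \<one>\<^bsub>G 0\<^esub>)} \<rparr>"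

end

theory Submission
  imports Defs
begin

definition qok :: "(nat \<Rightarrow> nat) \<Rightarrow> bool" where
  "qok q \<longleftrightarrow> (\<forall>n. 0 < q n) \<and> (\<forall>n. q n dvd q (Suc n))"

lemma qok_pos: "qok q \<Longrightarrow> 0 < q n" by (simp add: qok_def)

lemma qok_dvd: assumes "qok q" "n \<le> N" shows "q n dvd q N"
  using assms(2)
proof (induction N rule: dec_induct)
  case base then show ?case by simp
next
  case (step N) then show ?case using assms(1) unfolding qok_def using dvd_trans by blast
qed

lemma odo_lt: "x \<in> odo q \<Longrightarrow> x n < q n" by (simp add: odo_def)

lemma odo_mod: assumes "qok q" "x \<in> odo q" "n \<le> N" shows "x N mod q n = x n"
  using assms(3)
proof (induction N rule: dec_induct)
  case base then show ?case using assms odo_lt by simp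
next
  case (step N)
  have "x (Suc N) mod q n = (x (Suc N) mod q N) mod q n"
    using qok_dvd[OF assms(1) step(1)] by (simp add: mod_mod_cancel)
  also have "\<dots> = x N mod q n" using assms(2) by (simp add: odo_def)
  finally show ?case using step by simp
qed

lemma odo_memI: "(\<And>n. x n < q n) \<Longrightarrow> (\<And>n. x (Suc n) mod q n = x n) \<Longrightarrow> x \<in> odo q"
  by (simp add: odo_def)

lemma odo_add_mem: assumes "qok q" "x \<in> odo q" "y \<in> odo q" shows "odo_add q x y \<in> odo q"
proof (rule odo_memI)
  fix n show "odo_add q x y n < q n" using qok_pos[OF assms(1)] by (simp add: odo_add_def)
  have d: "q n dvd q (Suc n)" using assms(1) qok_def by blast
  have "odo_add q x y (Suc n) mod q n = (x (Suc n) + y (Suc n)) mod q n"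
    using d by (simp add: odo_add_def mod_mod_cancel)
  also have "\<dots> = (x (Suc n) mod q n + y (Suc n) mod q n) mod q n" by (simp add: mod_add_eq)
  also have "\<dots> = odo_add q x y n" using assms(2,3) by (simp add: odo_def odo_add_def)
  finally show "odo_add q x y (Suc n) mod q n = odo_add q x y n" .
qed

lemma odo_add_assoc: "odo_add q (odo_add q x y) z = odo_add q x (odo_add q y z)"
  by (simp add: odo_add_def mod_add_left_eq mod_add_right_eq add.assoc)

lemma odo_add_comm: "odo_add q x y = odo_add q y x"
  by (simp add: odo_add_def add.commute)

lemma odo_add_0: "x \<in> odo q \<Longrightarrow> odo_add q x (\<lambda>n. 0) = x"
  by (rule ext) (simp add: odo_add_def odo_lt)

definition odo_neg :: "(nat \<Rightarrow> nat) \<Rightarrow> (nat \<Rightarrow> nat) \<Rightarrow> (nat \<Rightarrow> nat)" where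
  "odo_neg q x = (\<lambda>n. (q n - x n) mod q n)"

lemma odo_neg_mem: assumes "qok q" "x \<in> odo q" shows "odo_neg q x \<in> odo q"
proof (rule odo_memI)
  fix n show "odo_neg q x n < q n" using qok_pos[OF assms(1)] by (simp add: odo_neg_def)
  have d: "q n dvd q (Suc n)" using assms(1) qok_def by blast
  then obtain c where c: "q (Suc n) = q n * c" by auto
  have lt: "x (Suc n) < q (Suc n)" "x n < q n" using assms odo_lt by auto
  have "int (odo_neg q x (Suc n) mod q n) = (int (q (Suc n)) - int (x (Suc n))) mod int (q (Suc n)) mod int (q n)"
    using lt by (simp add: odo_neg_def zmod_int of_nat_diff)
  also have "\<dots> = (int (q (Suc n)) - int (x (Suc n))) mod int (q n)"
  proof -
    have "int (q n) dvd int (q (Suc n))" using d by simp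
    then show ?thesis by (rule mod_mod_cancel)
  qed
  also have "\<dots> = (int (q (Suc n)) mod int (q n) - int (x (Suc n)) mod int (q n)) mod int (q n)"
    by (simp add: mod_diff_eq)
  also have "\<dots> = (0 - int (x (Suc n) mod q n)) mod int (q n)"
  proof -
    have "int (q n) dvd int (q (Suc n))" using d by simp
    then have "int (q (Suc n)) mod int (q n) = 0" by (rule dvd_imp_mod_0)
    then show ?thesis by (simp add: zmod_int)
  qed
  also have "\<dots> = (int (q n) - int (x n)) mod int (q n)"
    using assms(2) by (simp add: odo_def mod_diff_eq[symmetric])
  also have "\<dots> = int (odo_neg q x n)" using lt by (simp add: odo_neg_def zmod_int of_nat_diff)
  finally show "odo_neg q x (Suc n) mod q n = odo_neg q x n" by linarith
qed

lemma odo_add_neg: assumes "x \<in> odo q" shows "odo_add q (odo_neg q x) x = (\<lambda>n. 0)"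
proof (rule ext)
  fix n
  have "x n < q n" using assms odo_lt by auto
  then show "odo_add q (odo_neg q x) x n = 0"
    by (simp add: odo_add_def odo_neg_def mod_add_left_eq)
qed

definition cst :: "(nat \<Rightarrow> nat) \<Rightarrow> nat \<Rightarrow> (nat \<Rightarrow> nat)" where
  "cst q k = (\<lambda>n. k mod q n)"

lemma cst_mem: "qok q \<Longrightarrow> cst q k \<in> odo q"
  by (rule odo_memI) (auto simp: cst_def qok_def mod_mod_cancel)

lemma T_pow: "(\<And>n. x n < q n) \<Longrightarrow> (odo_T q ^^ k) x = (\<lambda>n. (x n + k) mod q n)"
proof (induction k)
  case 0 then show ?case by (simp add: fun_eq_iff)
next
  case (Suc k) then show ?case by (simp add: odo_T_def fun_eq_iff mod_Suc_eq)
qed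

lemma T_pow_add: "x \<in> odo q \<Longrightarrow> (odo_T q ^^ k) x = odo_add q x (cst q k)"
  by (simp add: T_pow odo_lt odo_add_def cst_def mod_add_right_eq)

lemma T_pow_mem: "qok q \<Longrightarrow> x \<in> odo q \<Longrightarrow> (odo_T q ^^ k) x \<in> odo q"
  by (simp add: T_pow_add odo_add_mem cst_mem)

lemma topspace_odo: "topspace (odo_top q) = odo q"
  by (auto simp: odo_top_def odo_lt)

lemma cont_local:
  assumes f: "continuous_map (odo_top q) (odo_top q) f" and z: "z \<in> odo q" and q: "qok q"
  shows "\<exists>N. \<forall>w\<in>odo q. w N = z N \<longrightarrow> f w n = f z n"
proof -
  have "continuous_map (odo_top q) (product_topology (\<lambda>n. discrete_topology {..<q n}) UNIV) f"
    using f unfolding odo_top_def using continuous_map_into_fulltopology by blast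
  then have c: "continuous_map (odo_top q) (discrete_topology {..<q n}) (\<lambda>x. f x n)"
    by (simp add: continuous_map_componentwise_UNIV)
  have "f z \<in> odo q" using continuous_map_funspace[OF f] z topspace_odo[of q] by auto
  then have fz: "f z n < q n" by (rule odo_lt)
  have "openin (odo_top q) {x \<in> topspace (odo_top q). f x n \<in> {f z n}}"
    using openin_continuous_map_preimage[OF c, of "{f z n}"] fz by simp
  then obtain T where T: "openin (product_topology (\<lambda>n. discrete_topology {..<q n}) UNIV) T"
    and S: "{x \<in> odo q. f x n = f z n} = T \<inter> odo q"
    unfolding odo_top_def topspace_odo[unfolded odo_top_def] openin_subtopology by auto
  have "z \<in> T" using S z by auto
  have "\<exists>U. finite {i \<in> UNIV. U i \<noteq> topspace (discrete_topology {..<q i})} \<and>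
      (\<forall>i \<in> UNIV. openin (discrete_topology {..<q i}) (U i)) \<and> z \<in> Pi\<^sub>E UNIV U \<and> Pi\<^sub>E UNIV U \<subseteq> T"
    using T \<open>z \<in> T\<close> unfolding openin_product_topology_alt by blast
  then obtain U where fin0: "finite {i \<in> UNIV. U i \<noteq> topspace (discrete_topology {..<q i})}"
    and zU: "z \<in> Pi\<^sub>E UNIV U" and UT: "Pi\<^sub>E UNIV U \<subseteq> T" by blast
  have fin: "finite {i. U i \<noteq> {..<q i}}" using fin0 by simp
  obtain N where N: "\<forall>i\<in>{i. U i \<noteq> {..<q i}}. i \<le> N"
    using fin finite_nat_set_iff_bounded_le by blast
  show ?thesis
  proof (intro exI ballI impI)
    fix w assume w: "w \<in> odo q" "w N = z N"
    have "w \<in> Pi\<^sub>E UNIV U"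
    proof (simp add: PiE_iff, intro allI)
      fix i show "w i \<in> U i"
      proof (cases "U i = {..<q i}")
        case True then show ?thesis using w odo_lt by auto
      next
        case False
        then have "i \<le> N" using N by auto
        then have "w i = z i" using odo_mod[OF q w(1), of i N] odo_mod[OF q z, of i N] w(2) by simp
        then show ?thesis using zU by auto
      qed
    qed
    then have "w \<in> T \<inter> odo q" using UT w by auto
    then show "f w n = f z n" using S by blast
  qed
qed

lemma cont_via:
  assumes q: "qok q" and into: "\<And>x. x \<in> odo q \<Longrightarrow> f x \<in> odo q"
    and loc: "\<And>n. \<exists>N. \<forall>x\<in>odo q. \<forall>y\<in>odo q. x N = y N \<longrightarrow> f x n = f y n"
  shows "continuous_map (odo_top q) (odo_top q) f"
proof -
  have "continuous_map (odo_top q) (discrete_topology {..<q n}) (\<lambda>x. f x n)" for n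
  proof -
    obtain N where N: "\<forall>x\<in>odo q. \<forall>y\<in>odo q. x N = y N \<longrightarrow> f x n = f y n" using loc by blast
    define g where "g t = (if \<exists>x\<in>odo q. x N = t then f (SOME x. x \<in> odo q \<and> x N = t) n else 0)" for t
    have g: "f x n = g (x N)" if x: "x \<in> odo q" for x
    proof -
      have "\<exists>y. y \<in> odo q \<and> y N = x N" using x by blast
      from someI_ex[OF this] have "(SOME y. y \<in> odo q \<and> y N = x N) \<in> odo q"
        "(SOME y. y \<in> odo q \<and> y N = x N) N = x N" by blast+
      then have "f x n = f (SOME y. y \<in> odo q \<and> y N = x N) n" using N x by metis
      moreover have "\<exists>y\<in>odo q. y N = x N" using x by blast
      ultimately show ?thesis unfolding g_def by presburger
    qed
    have gr: "g t < q n" for t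
    proof (cases "\<exists>x\<in>odo q. x N = t")
      case True
      then have "\<exists>x. x \<in> odo q \<and> x N = t" by blast
      from someI_ex[OF this] have "(SOME x. x \<in> odo q \<and> x N = t) \<in> odo q" by blast
      then show ?thesis using True into odo_lt unfolding g_def by simp
    next
      case False then show ?thesis unfolding g_def using qok_pos[OF q] by simp
    qed
    have gr': "g \<in> {..<q N} \<rightarrow> {..<q n}" using gr by auto
    have pr: "continuous_map (odo_top q) (discrete_topology {..<q N}) (\<lambda>x. x N)"
      unfolding odo_top_def
      by (intro continuous_map_from_subtopology continuous_map_product_projection) simp
    have "continuous_map (odo_top q) (discrete_topology {..<q n}) (g \<circ> (\<lambda>x. x N))"
      using pr gr' by (intro continuous_map_compose) auto
    then show ?thesis
      by (rule continuous_map_eq) (simp add: g topspace_odo)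
  qed
  then have prod: "continuous_map (odo_top q) (product_topology (\<lambda>n. discrete_topology {..<q n}) UNIV) f"
    by (simp add: continuous_map_componentwise_UNIV)
  have fs: "f \<in> topspace (odo_top q) \<rightarrow> odo q" using into topspace_odo by auto
  show ?thesis
    using continuous_map_in_subtopology[of "odo_top q" "product_topology (\<lambda>n. discrete_topology {..<q n}) UNIV" "odo q" f]
      prod fs unfolding odo_top_def[of q, symmetric] by blast
qed


lemma mod_shift_lemma:
  fixes P Q m a y y' :: nat
  assumes "P dvd m * Q" "y' mod Q = y"
  shows "(a + m * y') mod P = (a + m * y) mod P"
proof -
  obtain e where e: "m * Q = P * e" using assms(1) by auto
  have "y' = y + Q * (y' div Q)" by (metis assms(2) div_mult_mod_eq add.commute mult.commute)
  then have "a + m * y' = (a + m * y) + P * (e * (y' div Q))"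
    by (metis add.assoc add_mult_distrib2 e mult.assoc)
  then show ?thesis by (metis mod_mult_self2)
qed

lemma mod_low_lemma:
  fixes a m Q y :: nat
  assumes "a < m" "0 < Q"
  shows "(a + m * y) mod (m * Q) = a + m * (y mod Q)"
proof -
  have "a + m * y = (a + m * (y mod Q)) + (m * Q) * (y div Q)"
    by (metis add.assoc add_mult_distrib2 mult.assoc div_mult_mod_eq add.commute mult.commute)
  moreover have "a + m * (y mod Q) < m * Q"
  proof -
    have "y mod Q + 1 \<le> Q" using assms(2) by (simp add: Suc_leI)
    then have "m * (y mod Q) + m \<le> m * Q"
      by (metis mult.commute mult_le_mono1 add_mult_distrib2 mult.right_neutral)
    then show ?thesis using assms(1) by linarith
  qed
  ultimately show ?thesis by (metis mod_mult_self2 mod_less)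
qed

locale lev =
  fixes p :: "nat \<Rightarrow> nat" and m s :: nat and q :: "nat \<Rightarrow> nat"
  assumes p_ok: "qok p" and m_pos: "0 < m" and m_dvd: "m dvd p s"
    and mq: "\<And>i. m * q i = p (i + s)"
begin

lemma q_ok: "qok q"
proof -
  have pos: "0 < q i" for i using mq[of i] qok_pos[OF p_ok, of "i+s"] by (metis mult_0_right neq0_conv)
  have "q i dvd q (Suc i)" for i
  proof -
    have "p (i + s) dvd p (Suc i + s)" using p_ok qok_def by simp
    then have "m * q i dvd m * q (Suc i)" using mq by simp
    then show ?thesis using m_pos by simp
  qed
  then show ?thesis using pos qok_def by blast
qed

lemma pn_dvd: "p n dvd m * q n"
  using qok_dvd[OF p_ok, of n "n+s"] mq by simp

lemma m_dvd_N: "s \<le> N \<Longrightarrow> m dvd p N"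
  using m_dvd qok_dvd[OF p_ok] dvd_trans by blast

definition enc :: "nat \<Rightarrow> (nat \<Rightarrow> nat) \<Rightarrow> (nat \<Rightarrow> nat)" where
  "enc a y = (\<lambda>n. (a + m * y n) mod p n)"

definition dres :: "(nat \<Rightarrow> nat) \<Rightarrow> nat" where
  "dres x = x s mod m"

definition dquo :: "(nat \<Rightarrow> nat) \<Rightarrow> (nat \<Rightarrow> nat)" where
  "dquo x = (\<lambda>i. x (i + s) div m)"

lemma enc_mem: assumes "y \<in> odo q" shows "enc a y \<in> odo p"
proof (rule odo_memI)
  fix n
  show "enc a y n < p n" using qok_pos[OF p_ok] by (simp add: enc_def)
  have d: "p n dvd p (Suc n)" using p_ok qok_def by blast
  have "enc a y (Suc n) mod p n = (a + m * y (Suc n)) mod p n"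
    using d by (simp add: enc_def mod_mod_cancel)
  also have "\<dots> = (a + m * y n) mod p n"
    by (rule mod_shift_lemma[OF pn_dvd]) (use assms in \<open>simp add: odo_def\<close>)
  finally show "enc a y (Suc n) mod p n = enc a y n" by (simp add: enc_def)
qed

lemma dres_enc: "a < m \<Longrightarrow> dres (enc a y) = a"
proof -
  assume a: "a < m"
  have "(a + m * y s) mod p s mod m = (a + m * y s) mod m"
    using m_dvd by (simp add: mod_mod_cancel)
  then show ?thesis using a by (simp add: dres_def enc_def)
qed

lemma dquo_enc: assumes "a < m" "y \<in> odo q" shows "dquo (enc a y) = y"
proof (rule ext)
  fix i
  have "enc a y (i + s) = (a + m * y (i + s)) mod (m * q i)" by (simp add: enc_def mq)
  also have "\<dots> = a + m * (y (i + s) mod q i)"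
    by (rule mod_low_lemma[OF assms(1) qok_pos[OF q_ok]])
  also have "\<dots> = a + m * y i" using odo_mod[OF q_ok assms(2), of i "i+s"] by simp
  finally show "dquo (enc a y) i = y i" using assms(1) m_pos by (simp add: dquo_def)
qed

lemma dres_N: assumes "x \<in> odo p" "s \<le> N" shows "dres x = x N mod m"
proof -
  have "x N mod m = x N mod p s mod m" using m_dvd by (simp add: mod_mod_cancel)
  then show ?thesis using odo_mod[OF p_ok assms(1,2)] by (simp add: dres_def)
qed

lemma dres_lt: "dres x < m" using m_pos by (simp add: dres_def)

lemma dquo_mem: assumes x: "x \<in> odo p" shows "dquo x \<in> odo q"
proof (rule odo_memI)
  fix i
  have "x (i + s) < m * q i" using odo_lt[OF x] mq by metis
  then show "dquo x i < q i" by (simp add: dquo_def less_mult_imp_div_less mult.commute)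
  have "x (Suc i + s) mod (m * q i) = x (i + s)"
    using odo_mod[OF p_ok x, of "i + s" "Suc i + s"] mq by simp
  then have "x (Suc i + s) div m mod q i = x (i + s) div m"
    by (metis mod_mult2_eq div_mult_self1 add.commute div_less mod_less_divisor m_pos add_0 neq0_conv mult.commute)
  then show "dquo x (Suc i) mod q i = dquo x i" by (simp add: dquo_def)
qed

lemma enc_dec: assumes x: "x \<in> odo p" shows "enc (dres x) (dquo x) = x"
proof (rule ext)
  fix n
  have "dres x = x (n + s) mod m" using dres_N[OF x, of "n+s"] by simp
  then have "dres x + m * dquo x n = x (n + s)" by (simp add: dquo_def)
  then show "enc (dres x) (dquo x) n = x n"
    using odo_mod[OF p_ok x, of n "n+s"] by (simp add: enc_def)
qed

lemma enc_add: assumes "y \<in> odo q" "z \<in> odo q"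
  shows "odo_add p (enc a y) (enc 0 z) = enc a (odo_add q y z)"
proof (rule ext)
  fix n
  have "odo_add p (enc a y) (enc 0 z) n = (a + m * (y n + z n)) mod p n"
    by (simp add: odo_add_def enc_def mod_add_eq add_mult_distrib2 add.assoc)
  also have "\<dots> = (a + m * ((y n + z n) mod q n)) mod p n"
    by (rule mod_shift_lemma[OF pn_dvd]) simp
  finally show "odo_add p (enc a y) (enc 0 z) n = enc a (odo_add q y z) n"
    by (simp add: enc_def odo_add_def)
qed

lemma enc_cst: "enc 0 (cst q k) = cst p (m * k)"
proof (rule ext)
  fix n
  have "(0 + m * k) mod p n = (0 + m * (k mod q n)) mod p n"
    by (rule mod_shift_lemma[OF pn_dvd]) simp
  then show "enc 0 (cst q k) n = cst p (m * k) n" by (simp add: enc_def cst_def)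
qed

lemma enc_inj: assumes "a < m" "b < m" "y \<in> odo q" "z \<in> odo q" "enc a y = enc b z"
  shows "a = b" "y = z"
  using dres_enc[OF assms(1)] dres_enc[OF assms(2)] dquo_enc[OF assms(1,3)] dquo_enc[OF assms(2,4)] assms(5)
  by metis+

end

lemma funpow_mem: "(\<And>x. x \<in> X \<Longrightarrow> g x \<in> X) \<Longrightarrow> x \<in> X \<Longrightarrow> (g ^^ t) x \<in> X"
  by (induction t) auto

lemma comm_iter:
  assumes "\<And>x. x \<in> X \<Longrightarrow> g x \<in> X" "\<And>x. x \<in> X \<Longrightarrow> f (g x) = g (f x)"
    "\<And>x. x \<in> X \<Longrightarrow> f x \<in> X" "x \<in> X"
  shows "f ((g ^^ t) x) = (g ^^ t) (f x)"
proof (induction t)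
  case 0 then show ?case by simp
next
  case (Suc t)
  have "(g ^^ t) x \<in> X" by (rule funpow_mem[of X g, OF assms(1) assms(4)])
  then show ?case using Suc assms(2) by simp
qed

lemma zero_mem: "qok q \<Longrightarrow> (\<lambda>n. 0) \<in> odo q"
  by (rule odo_memI) (auto simp: qok_pos)

lemma transl:
  assumes p: "qok p" and f: "continuous_map (odo_top p) (odo_top p) f"
    and fX: "\<And>x. x \<in> odo p \<Longrightarrow> f x \<in> odo p"
    and comm: "\<And>x. x \<in> odo p \<Longrightarrow> f ((odo_T p ^^ M) x) = (odo_T p ^^ M) (f x)"
    and e: "e \<in> odo p" and et: "\<And>N. \<exists>t. (M * t) mod p N = e N"
    and x: "x \<in> odo p"
  shows "f (odo_add p x e) = odo_add p (f x) e"
proof (rule ext)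
  fix n
  define z where "z = odo_add p x e"
  have z: "z \<in> odo p" unfolding z_def using odo_add_mem[OF p x e] .
  obtain N0 where N0: "\<forall>w\<in>odo p. w N0 = z N0 \<longrightarrow> f w n = f z n"
    using cont_local[OF f z p] by blast
  define N where "N = max N0 n"
  obtain t where t: "(M * t) mod p N = e N" using et by blast
  define w where "w = (odo_T p ^^ (M * t)) x"
  have w: "w \<in> odo p" unfolding w_def using T_pow_mem[OF p x] .
  have "w N = (x N + M * t) mod p N" by (simp add: w_def T_pow odo_lt x)
  also have "\<dots> = (x N + (M * t) mod p N) mod p N" by (simp add: mod_add_right_eq)
  also have "\<dots> = z N" using t by (simp add: z_def odo_add_def)
  finally have "w N = z N" .
  then have "w N0 = z N0"
    using odo_mod[OF p w, of N0 N] odo_mod[OF p z, of N0 N] N_def by simp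
  then have "f w n = f z n" using N0 w by blast
  moreover have "f w = (odo_T p ^^ (M * t)) (f x)"
  proof -
    have "f (((odo_T p ^^ M) ^^ t) x) = ((odo_T p ^^ M) ^^ t) (f x)"
      by (rule comm_iter[of "odo p" "odo_T p ^^ M" f x t, OF T_pow_mem[OF p] comm fX x])
    then show ?thesis unfolding w_def by (simp add: funpow_mult)
  qed
  moreover have "(odo_T p ^^ (M * t)) (f x) n = (f x n + e n) mod p n"
  proof -
    have "e n = e N mod p n" using odo_mod[OF p e, of n N] N_def by simp
    also have "\<dots> = (M * t) mod p N mod p n" using t by simp
    also have "\<dots> = (M * t) mod p n"
    proof -
      have "p n dvd p N" by (rule qok_dvd[OF p]) (simp add: N_def)
      then show ?thesis by (rule mod_mod_cancel)
    qed
    finally show ?thesis using fX[OF x]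
      by (simp add: T_pow odo_lt mod_add_right_eq)
  qed
  ultimately show "f (odo_add p x e) n = odo_add p (f x) e n"
    by (simp add: z_def odo_add_def)
qed

context lev begin

definition Phi :: "(nat \<Rightarrow> nat \<Rightarrow> nat) \<Rightarrow> (nat \<Rightarrow> nat) \<Rightarrow> (nat \<Rightarrow> nat) \<Rightarrow> (nat \<Rightarrow> nat)" where
  "Phi v \<sigma> = (\<lambda>x\<in>odo p. enc (\<sigma> (dres x)) (odo_add q (v (\<sigma> (dres x))) (dquo x)))"

lemma carrW: "(v, \<sigma>) \<in> carrier (wr_grp q m) \<longleftrightarrow> v \<in> {..<m} \<rightarrow>\<^sub>E odo q \<and> \<sigma> permutes {..<m}"
  by (simp add: wr_grp_def)

lemma Phi_enc:
  assumes "(v, \<sigma>) \<in> carrier (wr_grp q m)" "a < m" "y \<in> odo q"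
  shows "Phi v \<sigma> (enc a y) = enc (\<sigma> a) (odo_add q (v (\<sigma> a)) y)"
  using assms enc_mem dres_enc dquo_enc by (simp add: Phi_def)

lemma sig_lt: "(v, \<sigma>) \<in> carrier (wr_grp q m) \<Longrightarrow> a < m \<Longrightarrow> \<sigma> a < m"
  using permutes_in_image[of \<sigma> "{..<m}" a] by (simp add: carrW)

lemma v_mem: "(v, \<sigma>) \<in> carrier (wr_grp q m) \<Longrightarrow> b < m \<Longrightarrow> v b \<in> odo q"
  by (auto simp: carrW PiE_iff)

lemma Phi_mem: assumes "(v, \<sigma>) \<in> carrier (wr_grp q m)" "x \<in> odo p"
  shows "Phi v \<sigma> x \<in> odo p"
  using assms by (simp add: Phi_def enc_mem odo_add_mem q_ok v_mem sig_lt dres_lt dquo_mem)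

lemma dec_cases: assumes "x \<in> odo p"
  obtains a y where "a < m" "y \<in> odo q" "x = enc a y"
  using enc_dec[OF assms] dres_lt dquo_mem[OF assms] by metis

lemma Phi_mult:
  assumes A: "(v, \<sigma>) \<in> carrier (wr_grp q m)" and B: "(w, \<tau>) \<in> carrier (wr_grp q m)"
  shows "(case (v, \<sigma>) \<otimes>\<^bsub>wr_grp q m\<^esub> (w, \<tau>) of (u, \<rho>) \<Rightarrow> Phi u \<rho>) =
         compose (odo p) (Phi v \<sigma>) (Phi w \<tau>)"
proof -
  define u where "u = (\<lambda>i\<in>{..<m}. odo_add q (v i) (w (inv_into UNIV \<sigma> i)))"
  have prod: "(v, \<sigma>) \<otimes>\<^bsub>wr_grp q m\<^esub> (w, \<tau>) = (u, \<sigma> \<circ> \<tau>)"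
    by (simp add: wr_grp_def u_def)
  have ps: "\<sigma> permutes {..<m}" "\<tau> permutes {..<m}" using A B by (auto simp: carrW)
  have C: "(u, \<sigma> \<circ> \<tau>) \<in> carrier (wr_grp q m)"
  proof -
    have "inv_into UNIV \<sigma> i < m" if "i < m" for i
      using permutes_in_image[OF permutes_inv[OF ps(1)], of i] that by simp
    then have "u \<in> {..<m} \<rightarrow>\<^sub>E odo q"
      using A B by (auto simp: u_def PiE_iff carrW intro!: odo_add_mem q_ok)
    then show ?thesis using ps by (simp add: carrW permutes_compose)
  qed
  show ?thesis unfolding prod
  proof (rule ext)
    fix x
    show "(case (u, \<sigma> \<circ> \<tau>) of (u, \<rho>) \<Rightarrow> Phi u \<rho>) x = compose (odo p) (Phi v \<sigma>) (Phi w \<tau>) x"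
    proof (cases "x \<in> odo p")
      case False then show ?thesis by (simp add: Phi_def compose_def)
    next
      case True
      then obtain a y where ay: "a < m" "y \<in> odo q" "x = enc a y" by (rule dec_cases)
      have ta: "\<tau> a < m" using sig_lt[OF B ay(1)] .
      have sta: "\<sigma> (\<tau> a) < m" using sig_lt[OF A ta] .
      have wy: "odo_add q (w (\<tau> a)) y \<in> odo q" using v_mem[OF B ta] ay(2) q_ok odo_add_mem by blast
      have "compose (odo p) (Phi v \<sigma>) (Phi w \<tau>) x = Phi v \<sigma> (Phi w \<tau> x)"
        using True by (simp add: compose_def)
      also have "\<dots> = enc (\<sigma> (\<tau> a)) (odo_add q (v (\<sigma> (\<tau> a))) (odo_add q (w (\<tau> a)) y))"
        using ay Phi_enc[OF B ay(1,2)] Phi_enc[OF A ta wy] by simp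
      also have "\<dots> = enc ((\<sigma> \<circ> \<tau>) a) (odo_add q (u ((\<sigma> \<circ> \<tau>) a)) y)"
        using sta permutes_inverses(2)[OF ps(1)] by (simp add: u_def odo_add_assoc)
      also have "\<dots> = Phi u (\<sigma> \<circ> \<tau>) x" using Phi_enc[OF C ay(1,2)] ay(3) by simp
      finally show ?thesis by simp
    qed
  qed
qed

end

lemma odo_0_add: "x \<in> odo q \<Longrightarrow> odo_add q (\<lambda>n. 0) x = x"
  using odo_add_0 odo_add_comm by metis

context lev begin

lemma Phi_cont: assumes A: "(v, \<sigma>) \<in> carrier (wr_grp q m)"
  shows "continuous_map (odo_top p) (odo_top p) (Phi v \<sigma>)"
proof (rule cont_via[OF p_ok])
  show "\<And>x. x \<in> odo p \<Longrightarrow> Phi v \<sigma> x \<in> odo p" using Phi_mem[OF A] .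
  fix n
  show "\<exists>N. \<forall>x\<in>odo p. \<forall>y\<in>odo p. x N = y N \<longrightarrow> Phi v \<sigma> x n = Phi v \<sigma> y n"
  proof (intro exI ballI impI)
    fix x y assume x: "x \<in> odo p" and y: "y \<in> odo p" and e: "x (n + s) = y (n + s)"
    have "dres x = dres y" using dres_N[OF x, of "n+s"] dres_N[OF y, of "n+s"] e by simp
    moreover have "dquo x n = dquo y n" using e by (simp add: dquo_def)
    ultimately show "Phi v \<sigma> x n = Phi v \<sigma> y n" using x y
      by (simp add: Phi_def enc_def odo_add_def)
  qed
qed

definition invW :: "(nat \<Rightarrow> nat \<Rightarrow> nat) \<Rightarrow> (nat \<Rightarrow> nat) \<Rightarrow> (nat \<Rightarrow> nat \<Rightarrow> nat) \<times> (nat \<Rightarrow> nat)" where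
  "invW v \<sigma> = ((\<lambda>i\<in>{..<m}. odo_neg q (v (\<sigma> i))), inv_into UNIV \<sigma>)"

lemma invW_carr: assumes A: "(v, \<sigma>) \<in> carrier (wr_grp q m)"
  shows "invW v \<sigma> \<in> carrier (wr_grp q m)"
proof -
  have ps: "\<sigma> permutes {..<m}" using A by (simp add: carrW)
  have "(\<lambda>i\<in>{..<m}. odo_neg q (v (\<sigma> i))) \<in> {..<m} \<rightarrow>\<^sub>E odo q"
    using A sig_lt v_mem odo_neg_mem[OF q_ok] by (auto simp: PiE_iff)
  then show ?thesis using permutes_inv[OF ps] by (simp add: invW_def carrW)
qed

lemma Phi_inv1: assumes A: "(v, \<sigma>) \<in> carrier (wr_grp q m)" and x: "x \<in> odo p"
  shows "Phi (fst (invW v \<sigma>)) (snd (invW v \<sigma>)) (Phi v \<sigma> x) = x"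
proof -
  obtain a y where ay: "a < m" "y \<in> odo q" "x = enc a y" using dec_cases[OF x] by blast
  have ps: "\<sigma> permutes {..<m}" using A by (simp add: carrW)
  have sa: "\<sigma> a < m" using sig_lt[OF A ay(1)] .
  have vs: "v (\<sigma> a) \<in> odo q" using v_mem[OF A sa] .
  have vy: "odo_add q (v (\<sigma> a)) y \<in> odo q" using odo_add_mem[OF q_ok vs ay(2)] .
  have B: "(fst (invW v \<sigma>), snd (invW v \<sigma>)) \<in> carrier (wr_grp q m)" using invW_carr[OF A] by simp
  have "Phi (fst (invW v \<sigma>)) (snd (invW v \<sigma>)) (Phi v \<sigma> x)
      = enc (inv_into UNIV \<sigma> (\<sigma> a)) (odo_add q (odo_neg q (v (\<sigma> (inv_into UNIV \<sigma> (\<sigma> a))))) (odo_add q (v (\<sigma> a)) y))"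
    using Phi_enc[OF A ay(1,2)] Phi_enc[OF B sa vy] ay(3) permutes_inverses(2)[OF ps] ay(1)
    by (simp add: invW_def)
  also have "\<dots> = enc a (odo_add q (odo_add q (odo_neg q (v (\<sigma> a))) (v (\<sigma> a))) y)"
    using permutes_inverses(2)[OF ps] by (simp add: odo_add_assoc)
  also have "\<dots> = x" using odo_add_neg[OF vs] odo_0_add[OF ay(2)] ay(3) by simp
  finally show ?thesis .
qed

lemma Phi_inv2: assumes A: "(v, \<sigma>) \<in> carrier (wr_grp q m)" and x: "x \<in> odo p"
  shows "Phi v \<sigma> (Phi (fst (invW v \<sigma>)) (snd (invW v \<sigma>)) x) = x"
proof -
  obtain a y where ay: "a < m" "y \<in> odo q" "x = enc a y" using dec_cases[OF x] by blast
  have ps: "\<sigma> permutes {..<m}" using A by (simp add: carrW)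
  have B: "(fst (invW v \<sigma>), snd (invW v \<sigma>)) \<in> carrier (wr_grp q m)" using invW_carr[OF A] by simp
  have ia: "inv_into UNIV \<sigma> a < m" using sig_lt[OF B ay(1)] by (simp add: invW_def)
  have vs: "v a \<in> odo q" using v_mem[OF A ay(1)] .
  have ny: "odo_add q (odo_neg q (v a)) y \<in> odo q" using odo_add_mem[OF q_ok odo_neg_mem[OF q_ok vs] ay(2)] .
  have "Phi (fst (invW v \<sigma>)) (snd (invW v \<sigma>)) x = enc (inv_into UNIV \<sigma> a) (odo_add q (odo_neg q (v a)) y)"
    using Phi_enc[OF B ay(1,2)] ay(3) ia permutes_inverses(1)[OF ps] by (simp add: invW_def)
  then have "Phi v \<sigma> (Phi (fst (invW v \<sigma>)) (snd (invW v \<sigma>)) x)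
      = enc a (odo_add q (v a) (odo_add q (odo_neg q (v a)) y))"
    using Phi_enc[OF A ia ny] permutes_inverses(1)[OF ps] by simp
  also have "\<dots> = enc a (odo_add q (odo_add q (v a) (odo_neg q (v a))) y)"
    by (simp only: odo_add_assoc)
  also have "\<dots> = enc a (odo_add q (odo_add q (odo_neg q (v a)) (v a)) y)"
    by (simp only: odo_add_comm[of q "v a" "odo_neg q (v a)"])
  also have "\<dots> = x" using odo_add_neg[OF vs] odo_0_add[OF ay(2)] ay(3) by simp
  finally show ?thesis .
qed

lemma Phi_homeo: assumes A: "(v, \<sigma>) \<in> carrier (wr_grp q m)"
  shows "homeomorphic_map (odo_top p) (odo_top p) (Phi v \<sigma>)"
proof -
  have B: "(fst (invW v \<sigma>), snd (invW v \<sigma>)) \<in> carrier (wr_grp q m)" using invW_carr[OF A] by simp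
  have "homeomorphic_maps (odo_top p) (odo_top p) (Phi v \<sigma>) (Phi (fst (invW v \<sigma>)) (snd (invW v \<sigma>)))"
    unfolding homeomorphic_maps_def topspace_odo
    using Phi_cont[OF A] Phi_cont[OF B] Phi_inv1[OF A] Phi_inv2[OF A] by blast
  then show ?thesis using homeomorphic_map_maps by blast
qed

lemma Phi_T: assumes A: "(v, \<sigma>) \<in> carrier (wr_grp q m)" and x: "x \<in> odo p"
  shows "Phi v \<sigma> ((odo_T p ^^ m) x) = (odo_T p ^^ m) (Phi v \<sigma> x)"
proof -
  obtain a y where ay: "a < m" "y \<in> odo q" "x = enc a y" using dec_cases[OF x] by blast
  have c1: "cst q 1 \<in> odo q" using cst_mem[OF q_ok] .
  have cm: "cst p m = enc 0 (cst q 1)" using enc_cst[of 1] by simp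
  have sa: "\<sigma> a < m" using sig_lt[OF A ay(1)] .
  have vs: "v (\<sigma> a) \<in> odo q" using v_mem[OF A sa] .
  have vy: "odo_add q (v (\<sigma> a)) y \<in> odo q" using odo_add_mem[OF q_ok vs ay(2)] .
  have y1: "odo_add q y (cst q 1) \<in> odo q" using odo_add_mem[OF q_ok ay(2) c1] .
  have "(odo_T p ^^ m) x = enc a (odo_add q y (cst q 1))"
    using T_pow_add[OF x, of m] cm enc_add[OF ay(2) c1] ay(3) by simp
  then have "Phi v \<sigma> ((odo_T p ^^ m) x) = enc (\<sigma> a) (odo_add q (v (\<sigma> a)) (odo_add q y (cst q 1)))"
    using Phi_enc[OF A ay(1) y1] by simp
  also have "\<dots> = odo_add p (enc (\<sigma> a) (odo_add q (v (\<sigma> a)) y)) (enc 0 (cst q 1))"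
    using enc_add[OF vy c1] by (simp add: odo_add_assoc)
  also have "\<dots> = (odo_T p ^^ m) (Phi v \<sigma> x)"
    using T_pow_add[OF Phi_mem[OF A x], of m] cm Phi_enc[OF A ay(1,2)] ay(3) by simp
  finally show ?thesis .
qed

definition Hm :: "((nat \<Rightarrow> nat) \<Rightarrow> (nat \<Rightarrow> nat)) set" where
  "Hm = {f \<in> carrier (aut_inf p). \<forall>x\<in>odo p. f ((odo_T p ^^ m) x) = (odo_T p ^^ m) (f x)}"

lemma Phi_Hm: assumes A: "(v, \<sigma>) \<in> carrier (wr_grp q m)"
  shows "Phi v \<sigma> \<in> Hm"
proof -
  have "Phi v \<sigma> \<in> extensional (odo p)" by (simp add: Phi_def)
  moreover have "\<exists>k\<ge>1. \<forall>x\<in>odo p. Phi v \<sigma> ((odo_T p ^^ k) x) = (odo_T p ^^ k) (Phi v \<sigma> x)"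
    using Phi_T[OF A] m_pos by (intro exI[of _ m]) auto
  ultimately show ?thesis using Phi_homeo[OF A] Phi_T[OF A]
    by (simp add: Hm_def aut_inf_def)
qed

lemma Phi_inj: "inj_on (\<lambda>(v, \<sigma>). Phi v \<sigma>) (carrier (wr_grp q m))"
proof (rule inj_onI, clarify)
  fix v \<sigma> w \<tau>
  assume A: "(v, \<sigma>) \<in> carrier (wr_grp q m)" and B: "(w, \<tau>) \<in> carrier (wr_grp q m)"
    and e: "Phi v \<sigma> = Phi w \<tau>"
  have z: "(\<lambda>n. 0) \<in> odo q" using zero_mem[OF q_ok] .
  have key: "\<sigma> a = \<tau> a \<and> v (\<sigma> a) = w (\<sigma> a)" if a: "a < m" for a
  proof -
    have "enc (\<sigma> a) (v (\<sigma> a)) = enc (\<tau> a) (w (\<tau> a))"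
      using Phi_enc[OF A a z] Phi_enc[OF B a z] e odo_add_0[OF v_mem[OF A sig_lt[OF A a]]]
        odo_add_0[OF v_mem[OF B sig_lt[OF B a]]] by simp
    then show ?thesis
      using enc_inj[OF sig_lt[OF A a] sig_lt[OF B a] v_mem[OF A sig_lt[OF A a]] v_mem[OF B sig_lt[OF B a]]]
      by auto
  qed
  have ps: "\<sigma> permutes {..<m}" "\<tau> permutes {..<m}" using A B by (auto simp: carrW)
  have st: "\<sigma> = \<tau>"
  proof (rule ext)
    fix a show "\<sigma> a = \<tau> a"
      using key permutes_not_in[OF ps(1)] permutes_not_in[OF ps(2)] by (cases "a < m") auto
  qed
  have vw: "v = w"
  proof (rule ext)
    fix b show "v b = w b"
    proof (cases "b < m")
      case True
      have "inv_into UNIV \<sigma> b < m" using permutes_in_image[OF permutes_inv[OF ps(1)], of b] True by simp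
      then show ?thesis using key[of "inv_into UNIV \<sigma> b"] permutes_inverses(1)[OF ps(1)] by simp
    next
      case False
      then show ?thesis using A B by (auto simp: carrW PiE_iff extensional_def)
    qed
  qed
  show "v = w \<and> \<sigma> = \<tau>" using st vw by simp
qed

end

context lev begin

lemma Hm_props: assumes "f \<in> Hm"
  shows "f \<in> extensional (odo p)" "continuous_map (odo_top p) (odo_top p) f"
    "\<And>x. x \<in> odo p \<Longrightarrow> f x \<in> odo p" "inj_on f (odo p)"
    "\<And>x. x \<in> odo p \<Longrightarrow> f ((odo_T p ^^ m) x) = (odo_T p ^^ m) (f x)"
proof -
  have h: "homeomorphic_map (odo_top p) (odo_top p) f" and ex: "f \<in> extensional (odo p)"
    using assms by (auto simp: Hm_def aut_inf_def)
  show "f \<in> extensional (odo p)" using ex .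
  show c: "continuous_map (odo_top p) (odo_top p) f" using homeomorphic_imp_continuous_map[OF h] .
  show "\<And>x. x \<in> odo p \<Longrightarrow> f x \<in> odo p"
    using continuous_map_funspace[OF c] topspace_odo[of p] by auto
  show "inj_on f (odo p)" using homeomorphic_imp_injective_map[OF h] topspace_odo[of p] by simp
  show "\<And>x. x \<in> odo p \<Longrightarrow> f ((odo_T p ^^ m) x) = (odo_T p ^^ m) (f x)"
    using assms by (simp add: Hm_def)
qed

lemma Phi_surj: assumes H: "f \<in> Hm"
  shows "\<exists>v \<sigma>. (v, \<sigma>) \<in> carrier (wr_grp q m) \<and> f = Phi v \<sigma>"
proof -
  note hp = Hm_props[OF H]
  define z0 :: "nat \<Rightarrow> nat" where "z0 = (\<lambda>n. 0)"
  have z0: "z0 \<in> odo q" unfolding z0_def using zero_mem[OF q_ok] .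
  have tr: "f (enc a y) = odo_add p (f (enc a z0)) (enc 0 y)" if a: "a < m" and y: "y \<in> odo q" for a y
  proof -
    have "enc a y = odo_add p (enc a z0) (enc 0 y)"
      using enc_add[OF z0 y, of a] odo_0_add[OF y] by (simp add: z0_def)
    moreover have "f (odo_add p (enc a z0) (enc 0 y)) = odo_add p (f (enc a z0)) (enc 0 y)"
    proof (rule transl[OF p_ok hp(2) hp(3) hp(5)])
      show "enc 0 y \<in> odo p" using enc_mem[OF y] .
      show "enc a z0 \<in> odo p" using enc_mem[OF z0] .
      fix N show "\<exists>t. (m * t) mod p N = enc 0 y N" by (rule exI[of _ "y N"]) (simp add: enc_def)
    qed
    ultimately show ?thesis by simp
  qed
  define \<sigma>0 where "\<sigma>0 a = dres (f (enc a z0))" for a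
  define cq where "cq a = dquo (f (enc a z0))" for a
  have cq: "cq a \<in> odo q" for a unfolding cq_def using dquo_mem hp(3) enc_mem[OF z0] by blast
  have s0: "\<sigma>0 a < m" for a unfolding \<sigma>0_def using dres_lt .
  have F: "f (enc a y) = enc (\<sigma>0 a) (odo_add q (cq a) y)" if a: "a < m" and y: "y \<in> odo q" for a y
  proof -
    have "f (enc a z0) = enc (\<sigma>0 a) (cq a)"
      unfolding \<sigma>0_def cq_def using enc_dec hp(3) enc_mem[OF z0] by simp
    then show ?thesis using tr[OF a y] enc_add[OF cq y] by simp
  qed
  have inj0: "inj_on \<sigma>0 {..<m}"
  proof (rule inj_onI)
    fix a b assume a: "a \<in> {..<m}" and b: "b \<in> {..<m}" and e: "\<sigma>0 a = \<sigma>0 b"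
    define y where "y = odo_add q (odo_neg q (cq a)) (cq b)"
    have y: "y \<in> odo q" unfolding y_def using odo_add_mem[OF q_ok odo_neg_mem[OF q_ok cq] cq] .
    have "odo_add q (cq a) y = cq b"
      unfolding y_def using odo_add_neg[OF cq[of a]] odo_0_add[OF cq[of b]]
      by (simp only: odo_add_assoc[symmetric] odo_add_comm[of q "cq a" "odo_neg q (cq a)"])
    then have "f (enc a y) = f (enc b z0)"
      using F[OF _ y, of a] F[OF _ z0, of b] a b e odo_add_0[OF cq[of b]] by (simp add: z0_def)
    then have "enc a y = enc b z0"
      using hp(4) enc_mem[OF y] enc_mem[OF z0] by (meson inj_onD)
    then show "a = b" using enc_inj(1)[OF _ _ y z0] a b by simp
  qed
  define \<sigma> where "\<sigma> a = (if a < m then \<sigma>0 a else a)" for a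
  have inj: "inj_on \<sigma> {..<m}" using inj0 unfolding \<sigma>_def inj_on_def by simp
  have img: "\<sigma> ` {..<m} = {..<m}"
    by (rule endo_inj_surj[OF _ _ inj]) (auto simp: \<sigma>_def s0)
  have ps: "\<sigma> permutes {..<m}"
    by (rule bij_imp_permutes) (use inj img in \<open>auto simp: bij_betw_def \<sigma>_def\<close>)
  define v where "v = (\<lambda>b\<in>{..<m}. cq (inv_into UNIV \<sigma> b))"
  have A: "(v, \<sigma>) \<in> carrier (wr_grp q m)"
    using ps cq by (simp add: carrW v_def)
  have "f = Phi v \<sigma>"
  proof (rule ext)
    fix x
    show "f x = Phi v \<sigma> x"
    proof (cases "x \<in> odo p")
      case False
      then show ?thesis using hp(1) by (simp add: Phi_def extensional_def)
    next
      case True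
      then obtain a y where ay: "a < m" "y \<in> odo q" "x = enc a y" by (rule dec_cases)
      have "v (\<sigma> a) = cq a"
        using permutes_inverses(2)[OF ps, of a] s0[of a] ay(1) by (simp add: v_def \<sigma>_def)
      then show ?thesis using Phi_enc[OF A ay(1,2)] F[OF ay(1,2)] ay(1,3) by (simp add: \<sigma>_def)
    qed
  qed
  then show ?thesis using A by blast
qed

lemma Phi_bij: "bij_betw (\<lambda>(v, \<sigma>). Phi v \<sigma>) (carrier (wr_grp q m)) Hm"
proof -
  have "(\<lambda>(v, \<sigma>). Phi v \<sigma>) ` carrier (wr_grp q m) = Hm"
  proof
    show "(\<lambda>(v, \<sigma>). Phi v \<sigma>) ` carrier (wr_grp q m) \<subseteq> Hm" using Phi_Hm by auto
    show "Hm \<subseteq> (\<lambda>(v, \<sigma>). Phi v \<sigma>) ` carrier (wr_grp q m)"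
    proof
      fix f assume "f \<in> Hm"
      then obtain v \<sigma> where "(v, \<sigma>) \<in> carrier (wr_grp q m)" "f = Phi v \<sigma>" using Phi_surj by blast
      then show "f \<in> (\<lambda>(v, \<sigma>). Phi v \<sigma>) ` carrier (wr_grp q m)" by force
    qed
  qed
  then show ?thesis using Phi_inj by (simp add: bij_betw_def)
qed

end

lemma comm_mult:
  assumes p: "qok p" and fX: "\<And>x. x \<in> odo p \<Longrightarrow> f x \<in> odo p"
    and comm: "\<And>x. x \<in> odo p \<Longrightarrow> f ((odo_T p ^^ a) x) = (odo_T p ^^ a) (f x)"
    and x: "x \<in> odo p"
  shows "f ((odo_T p ^^ (a * b)) x) = (odo_T p ^^ (a * b)) (f x)"
proof -
  have "f (((odo_T p ^^ a) ^^ b) x) = ((odo_T p ^^ a) ^^ b) (f x)"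
    by (rule comm_iter[of "odo p" "odo_T p ^^ a" f x b, OF T_pow_mem[OF p] comm fX x])
  then show ?thesis by (simp add: funpow_mult)
qed

lemma comm_dvd:
  assumes p: "qok p" and fX: "\<And>x. x \<in> odo p \<Longrightarrow> f x \<in> odo p"
    and comm: "\<And>x. x \<in> odo p \<Longrightarrow> f ((odo_T p ^^ a) x) = (odo_T p ^^ a) (f x)"
    and d: "a dvd c" and x: "x \<in> odo p"
  shows "f ((odo_T p ^^ c) x) = (odo_T p ^^ c) (f x)"
proof -
  obtain b where "c = a * b" using d by auto
  then show ?thesis using comm_mult[where p=p and f=f and a=a and x=x and b=b, OF p fX comm x] by simp
qed

lemma gcd_stable:
  fixes M :: nat and p :: "nat \<Rightarrow> nat"
  assumes p: "qok p" and M: "0 < M"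
  shows "\<exists>K. \<forall>N\<ge>K. gcd M (p N) = gcd M (p K)"
proof -
  define S where "S = range (\<lambda>n. gcd M (p n))"
  have fin: "finite S" unfolding S_def
    by (rule finite_subset[of _ "{..M}"]) (auto simp: M dvd_imp_le)
  have "S \<noteq> {}" unfolding S_def by simp
  then have "Max S \<in> S" using fin Max_in by blast
  then obtain K where K: "gcd M (p K) = Max S" unfolding S_def by auto
  show ?thesis
  proof (intro exI allI impI)
    fix N assume N: "K \<le> N"
    have "gcd M (p K) dvd gcd M (p N)"
      using qok_dvd[OF p N] by (meson dvd_trans gcd_dvd1 gcd_dvd2 gcd_greatest)
    moreover have "gcd M (p N) \<le> gcd M (p K)" using K fin unfolding S_def by simp
    moreover have "0 < gcd M (p N)" using M by simp
    ultimately show "gcd M (p N) = gcd M (p K)" by (simp add: dvd_imp_le le_antisym)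
  qed
qed

lemma reduce:
  assumes p: "qok p" and f: "continuous_map (odo_top p) (odo_top p) f"
    and fX: "\<And>x. x \<in> odo p \<Longrightarrow> f x \<in> odo p"
    and M: "1 \<le> M"
    and comm: "\<And>x. x \<in> odo p \<Longrightarrow> f ((odo_T p ^^ M) x) = (odo_T p ^^ M) (f x)"
  shows "\<exists>K. \<forall>x\<in>odo p. f ((odo_T p ^^ p K) x) = (odo_T p ^^ p K) (f x)"
proof -
  have M0: "0 < M" using M by simp
  obtain K where K: "\<forall>N\<ge>K. gcd M (p N) = gcd M (p K)" using gcd_stable[OF p M0] by blast
  define d where "d = gcd M (p K)"
  have et: "\<exists>t. (M * t) mod p N = cst p d N" for N
  proof -
    define N' where "N' = max N K"
    have KN: "K \<le> N'" by (simp add: N'_def)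
    have g: "gcd M (p N') = d" using K KN unfolding d_def by blast
    obtain t y where "M * t = p N' * y + gcd M (p N')" using bezout_nat[of M "p N'"] M by auto
    then have "(M * t) mod p N' = d mod p N'" using g by simp
    then have "(M * t) mod p N' mod p N = d mod p N' mod p N" by simp
    moreover have "p N dvd p N'" by (rule qok_dvd[OF p]) (simp add: N'_def)
    ultimately have "(M * t) mod p N = d mod p N" by (simp add: mod_mod_cancel)
    then show ?thesis by (auto simp: cst_def)
  qed
  have cd: "f ((odo_T p ^^ d) x) = (odo_T p ^^ d) (f x)" if x: "x \<in> odo p" for x
    using transl[OF p f fX comm cst_mem[OF p] et x] T_pow_add[OF x] T_pow_add[OF fX[OF x]] by simp
  have "d dvd p K" unfolding d_def by simp
  then have "\<forall>x\<in>odo p. f ((odo_T p ^^ p K) x) = (odo_T p ^^ p K) (f x)"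
    using comm_dvd[where p=p and f=f and a=d and c="p K", OF p fX cd] by blast
  then show ?thesis by blast
qed


lemma dirlim_iso:
  fixes G :: "nat \<Rightarrow> 'a monoid" and U :: "'b monoid" and \<phi> :: "nat \<Rightarrow> 'a \<Rightarrow> 'b" and H :: "nat \<Rightarrow> 'b set"
  assumes Gm: "\<And>k x y. x \<in> carrier (G k) \<Longrightarrow> y \<in> carrier (G k) \<Longrightarrow> x \<otimes>\<^bsub>G k\<^esub> y \<in> carrier (G k)"
    and bij: "\<And>k. bij_betw (\<phi> k) (carrier (G k)) (H k)"
    and hm: "\<And>k x y. x \<in> carrier (G k) \<Longrightarrow> y \<in> carrier (G k) \<Longrightarrow> \<phi> k (x \<otimes>\<^bsub>G k\<^esub> y) = \<phi> k x \<otimes>\<^bsub>U\<^esub> \<phi> k y"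
    and mono: "\<And>k. H k \<subseteq> H (Suc k)"
    and cov: "carrier U = (\<Union>k. H k)"
  defines "j \<equiv> \<lambda>k x. inv_into (carrier (G (Suc k))) (\<phi> (Suc k)) (\<phi> k x)"
  shows "(\<forall>k. j k \<in> hom (G k) (G (Suc k)) \<and> inj_on (j k) (carrier (G k))) \<and> U \<cong> dirlim G j"
proof -
  define \<psi> where "\<psi> k = inv_into (carrier (G k)) (\<phi> k)" for k
  have inj: "inj_on (\<phi> k) (carrier (G k))" for k using bij_betw_imp_inj_on[OF bij[of k]] .
  have img: "\<phi> k ` carrier (G k) = H k" for k using bij_betw_imp_surj_on[OF bij[of k]] .
  have \<phi>in: "x \<in> carrier (G k) \<Longrightarrow> \<phi> k x \<in> H k" for k x using img by blast
  have \<psi>in: "u \<in> H k \<Longrightarrow> \<psi> k u \<in> carrier (G k)" for k u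
    using inv_into_into[of u "\<phi> k" "carrier (G k)"] img by (simp add: \<psi>_def)
  have \<phi>\<psi>: "u \<in> H k \<Longrightarrow> \<phi> k (\<psi> k u) = u" for k u
    using f_inv_into_f[of u "\<phi> k" "carrier (G k)"] img by (simp add: \<psi>_def)
  have \<psi>\<phi>: "x \<in> carrier (G k) \<Longrightarrow> \<psi> k (\<phi> k x) = x" for k x
    using inv_into_f_f[OF inj, of x k] by (simp add: \<psi>_def)
  have monoH: "k \<le> l \<Longrightarrow> H k \<subseteq> H l" for k l
  proof (induction l rule: dec_induct)
    case base then show ?case by simp
  next
    case (step n) then show ?case using mono[of n] by blast
  qed
  have jdef: "j k x = \<psi> (Suc k) (\<phi> k x)" for k x by (simp add: j_def \<psi>_def)
  have \<phi>in2: "x \<in> carrier (G k) \<Longrightarrow> \<phi> k x \<in> H (Suc k)" for k x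
    using \<phi>in[of x k] mono[of k] by blast
  have jin: "x \<in> carrier (G k) \<Longrightarrow> j k x \<in> carrier (G (Suc k))" for k x
    unfolding jdef by (rule \<psi>in[OF \<phi>in2])
  have \<phi>j: "x \<in> carrier (G k) \<Longrightarrow> \<phi> (Suc k) (j k x) = \<phi> k x" for k x
    unfolding jdef by (rule \<phi>\<psi>[OF \<phi>in2])
  have jhom: "j k \<in> hom (G k) (G (Suc k))" for k
  proof (rule homI)
    fix x assume "x \<in> carrier (G k)" then show "j k x \<in> carrier (G (Suc k))" by (rule jin)
  next
    fix x y assume x: "x \<in> carrier (G k)" and y: "y \<in> carrier (G k)"
    have c: "j k x \<otimes>\<^bsub>G (Suc k)\<^esub> j k y \<in> carrier (G (Suc k))" using Gm jin x y by blast
    have "\<phi> (Suc k) (j k x \<otimes>\<^bsub>G (Suc k)\<^esub> j k y) = \<phi> k (x \<otimes>\<^bsub>G k\<^esub> y)"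
      using hm[OF jin[OF x] jin[OF y]] hm[OF x y] \<phi>j x y by simp
    then have "\<phi> (Suc k) (j k x \<otimes>\<^bsub>G (Suc k)\<^esub> j k y) = \<phi> (Suc k) (j k (x \<otimes>\<^bsub>G k\<^esub> y))"
      using \<phi>j Gm x y by simp
    then show "j k (x \<otimes>\<^bsub>G k\<^esub> y) = j k x \<otimes>\<^bsub>G (Suc k)\<^esub> j k y"
      using inj_onD[OF inj _ c jin[OF Gm[OF x y]]] by simp
  qed
  have jinj: "inj_on (j k) (carrier (G k))" for k
  proof (rule inj_onI)
    fix x y assume x: "x \<in> carrier (G k)" and y: "y \<in> carrier (G k)" and e: "j k x = j k y"
    then have "\<phi> k x = \<phi> k y" using \<phi>j by metis
    then show "x = y" using inj_onD[OF inj _ x y] by simp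
  qed
  have DM: "x \<in> carrier (G k) \<Longrightarrow> dl_map j k d x \<in> carrier (G (k + d)) \<and> \<phi> (k + d) (dl_map j k d x) = \<phi> k x" for k d x
  proof (induction d)
    case 0 then show ?case by simp
  next
    case (Suc d)
    then have a: "dl_map j k d x \<in> carrier (G (k + d))" and b: "\<phi> (k + d) (dl_map j k d x) = \<phi> k x" by auto
    show ?case using jin[OF a] \<phi>j[OF a] b by simp
  qed
  have REL: "((k, x), (l, y)) \<in> dl_rel G j \<longleftrightarrow> x \<in> carrier (G k) \<and> y \<in> carrier (G l) \<and> \<phi> k x = \<phi> l y" for k x l y
  proof
    assume "((k, x), (l, y)) \<in> dl_rel G j"
    then obtain m where x: "x \<in> carrier (G k)" and y: "y \<in> carrier (G l)" and km: "k \<le> m" and lm: "l \<le> m"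
      and e: "dl_map j k (m - k) x = dl_map j l (m - l) y" unfolding dl_rel_def by blast
    have "\<phi> k x = \<phi> m (dl_map j k (m - k) x)" using DM[OF x, of "m - k"] km by simp
    also have "\<dots> = \<phi> l y" using DM[OF y, of "m - l"] lm e by simp
    finally show "x \<in> carrier (G k) \<and> y \<in> carrier (G l) \<and> \<phi> k x = \<phi> l y" using x y by simp
  next
    assume "x \<in> carrier (G k) \<and> y \<in> carrier (G l) \<and> \<phi> k x = \<phi> l y"
    then have x: "x \<in> carrier (G k)" and y: "y \<in> carrier (G l)" and e: "\<phi> k x = \<phi> l y" by auto
    define m where "m = max k l"
    have a: "dl_map j k (m - k) x \<in> carrier (G m)" "\<phi> m (dl_map j k (m - k) x) = \<phi> k x"
      using DM[OF x, of "m - k"] by (simp_all add: m_def)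
    have b: "dl_map j l (m - l) y \<in> carrier (G m)" "\<phi> m (dl_map j l (m - l) y) = \<phi> l y"
      using DM[OF y, of "m - l"] by (simp_all add: m_def)
    have "dl_map j k (m - k) x = dl_map j l (m - l) y"
      using inj_onD[OF inj _ a(1) b(1)] a(2) b(2) e by simp
    then show "((k, x), (l, y)) \<in> dl_rel G j" unfolding dl_rel_def using x y
      by (auto simp: m_def intro!: exI[of _ "max k l"])
  qed
  define cls where "cls u = {(l, y). y \<in> carrier (G l) \<and> \<phi> l y = u}" for u
  have CL: "x \<in> carrier (G k) \<Longrightarrow> dl_rel G j `` {(k, x)} = cls (\<phi> k x)" for k x
    unfolding cls_def using REL by auto
  have inU: "u \<in> carrier U \<Longrightarrow> \<exists>k. u \<in> H k" for u using cov by blast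
  have HU: "u \<in> H k \<Longrightarrow> u \<in> carrier U" for u k using cov by blast
  have carrD: "carrier (dirlim G j) = cls ` carrier U"
  proof -
    have "carrier (dirlim G j) = (\<Union>a\<in>(SIGMA k:UNIV. carrier (G k)). {dl_rel G j `` {a}})"
      by (simp add: dirlim_def quotient_def)
    also have "\<dots> = cls ` carrier U"
    proof
      show "(\<Union>a\<in>(SIGMA k:UNIV. carrier (G k)). {dl_rel G j `` {a}}) \<subseteq> cls ` carrier U"
        using CL \<phi>in HU by fastforce
      show "cls ` carrier U \<subseteq> (\<Union>a\<in>(SIGMA k:UNIV. carrier (G k)). {dl_rel G j `` {a}})"
      proof
        fix A assume "A \<in> cls ` carrier U"
        then obtain u where u: "u \<in> carrier U" "A = cls u" by blast
        obtain k where k: "u \<in> H k" using inU[OF u(1)] by blast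
        have "A = dl_rel G j `` {(k, \<psi> k u)}" using CL[OF \<psi>in[OF k]] \<phi>\<psi>[OF k] u(2) by simp
        then show "A \<in> (\<Union>a\<in>(SIGMA k:UNIV. carrier (G k)). {dl_rel G j `` {a}})"
          using \<psi>in[OF k] by blast
      qed
    qed
    finally show ?thesis .
  qed
  have clsne: "u \<in> carrier U \<Longrightarrow> \<exists>a. a \<in> cls u" for u
    using inU \<psi>in \<phi>\<psi> unfolding cls_def by blast
  have cls_some: "u \<in> carrier U \<Longrightarrow> (SOME a. a \<in> cls u) = (k, x) \<Longrightarrow> x \<in> carrier (G k) \<and> \<phi> k x = u" for u k x
  proof -
    assume u: "u \<in> carrier U" and e: "(SOME a. a \<in> cls u) = (k, x)"
    have "(SOME a. a \<in> cls u) \<in> cls u" using someI_ex[OF clsne[OF u]] .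
    then show ?thesis using e unfolding cls_def by simp
  qed
  have hhom: "cls \<in> hom U (dirlim G j)"
  proof (rule homI)
    fix u assume "u \<in> carrier U" then show "cls u \<in> carrier (dirlim G j)" using carrD by blast
  next
    fix u v assume u: "u \<in> carrier U" and v: "v \<in> carrier U"
    obtain k x where kx: "(SOME a. a \<in> cls u) = (k, x)" by (cases "SOME a. a \<in> cls u") auto
    obtain l y where ly: "(SOME a. a \<in> cls v) = (l, y)" by (cases "SOME a. a \<in> cls v") auto
    have x: "x \<in> carrier (G k)" "\<phi> k x = u" using cls_some[OF u kx] by auto
    have y: "y \<in> carrier (G l)" "\<phi> l y = v" using cls_some[OF v ly] by auto
    define m where "m = max k l"
    have a: "dl_map j k (m - k) x \<in> carrier (G m)" "\<phi> m (dl_map j k (m - k) x) = u"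
      using DM[OF x(1), of "m - k"] x(2) by (simp_all add: m_def)
    have b: "dl_map j l (m - l) y \<in> carrier (G m)" "\<phi> m (dl_map j l (m - l) y) = v"
      using DM[OF y(1), of "m - l"] y(2) by (simp_all add: m_def)
    have c: "dl_map j k (m - k) x \<otimes>\<^bsub>G m\<^esub> dl_map j l (m - l) y \<in> carrier (G m)" using Gm a(1) b(1) by blast
    have "cls u \<otimes>\<^bsub>dirlim G j\<^esub> cls v = dl_rel G j `` {(m, dl_map j k (m - k) x \<otimes>\<^bsub>G m\<^esub> dl_map j l (m - l) y)}"
      by (simp add: dirlim_def kx ly Let_def m_def)
    also have "\<dots> = cls (u \<otimes>\<^bsub>U\<^esub> v)" using CL[OF c] hm[OF a(1) b(1)] a(2) b(2) by simp
    finally show "cls (u \<otimes>\<^bsub>U\<^esub> v) = cls u \<otimes>\<^bsub>dirlim G j\<^esub> cls v" by simp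
  qed
  have hinj: "inj_on cls (carrier U)"
  proof (rule inj_onI)
    fix u v assume u: "u \<in> carrier U" and v: "v \<in> carrier U" and e: "cls u = cls v"
    obtain k where k: "u \<in> H k" using inU[OF u] by blast
    have "(k, \<psi> k u) \<in> cls u" using \<psi>in[OF k] \<phi>\<psi>[OF k] unfolding cls_def by simp
    then have "(k, \<psi> k u) \<in> cls v" using e by simp
    then show "u = v" using \<phi>\<psi>[OF k] unfolding cls_def by simp
  qed
  have "cls \<in> iso U (dirlim G j)"
    unfolding iso_def bij_betw_def using hhom hinj carrD by simp
  then have "U \<cong> dirlim G j" unfolding is_iso_def by blast
  then show ?thesis using jhom jinj by blast
qed


context lev begin

lemma wr_closed: assumes A: "(v, \<sigma>) \<in> carrier (wr_grp q m)" and B: "(w, \<tau>) \<in> carrier (wr_grp q m)"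
  shows "(v, \<sigma>) \<otimes>\<^bsub>wr_grp q m\<^esub> (w, \<tau>) \<in> carrier (wr_grp q m)"
proof -
  define u where "u = (\<lambda>i\<in>{..<m}. odo_add q (v i) (w (inv_into UNIV \<sigma> i)))"
  have prod: "(v, \<sigma>) \<otimes>\<^bsub>wr_grp q m\<^esub> (w, \<tau>) = (u, \<sigma> \<circ> \<tau>)"
    by (simp add: wr_grp_def u_def)
  have ps: "\<sigma> permutes {..<m}" "\<tau> permutes {..<m}" using A B by (auto simp: carrW)
  have "inv_into UNIV \<sigma> i < m" if "i < m" for i
    using permutes_in_image[OF permutes_inv[OF ps(1)], of i] that by simp
  then have "u \<in> {..<m} \<rightarrow>\<^sub>E odo q"
    using A B by (auto simp: u_def PiE_iff carrW intro!: odo_add_mem q_ok)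
  then show ?thesis using ps prod by (simp add: carrW permutes_compose)
qed

lemma Hm_eq: "Hm = {f \<in> carrier (aut_inf p). \<forall>x\<in>odo p. f ((odo_T p ^^ m) x) = (odo_T p ^^ m) (f x)}"
  by (simp add: Hm_def)

end

definition Hset :: "(nat \<Rightarrow> nat) \<Rightarrow> nat \<Rightarrow> ((nat \<Rightarrow> nat) \<Rightarrow> (nat \<Rightarrow> nat)) set" where
  "Hset p m = {f \<in> carrier (aut_inf p). \<forall>x\<in>odo p. f ((odo_T p ^^ m) x) = (odo_T p ^^ m) (f x)}"

lemma scale_qok: "is_scale p \<Longrightarrow> qok p"
  by (simp add: is_scale_def qok_def)

lemma lev0: "qok p \<Longrightarrow> lev p 1 0 p"
  by (unfold_locales) auto

lemma levk: assumes p: "qok p" and k: "0 < k" shows "lev p (p (k - 1)) k (shift_scale p k)"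
proof
  show "qok p" by (rule p)
  show "0 < p (k - 1)" by (rule qok_pos[OF p])
  show "p (k - 1) dvd p k" by (rule qok_dvd[OF p]) simp
  fix i
  have "p (k - 1) dvd p (i + k)" by (rule qok_dvd[OF p]) simp
  then show "p (k - 1) * shift_scale p k i = p (i + k)" by (simp add: shift_scale_def)
qed

lemma aut_props: assumes p: "qok p" and f: "f \<in> carrier (aut_inf p)"
  shows "continuous_map (odo_top p) (odo_top p) f" "\<And>x. x \<in> odo p \<Longrightarrow> f x \<in> odo p"
    "\<exists>M\<ge>1. \<forall>x\<in>odo p. f ((odo_T p ^^ M) x) = (odo_T p ^^ M) (f x)"
proof -
  have h: "homeomorphic_map (odo_top p) (odo_top p) f" using f by (simp add: aut_inf_def)
  show c: "continuous_map (odo_top p) (odo_top p) f" using homeomorphic_imp_continuous_map[OF h] .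
  show "\<And>x. x \<in> odo p \<Longrightarrow> f x \<in> odo p"
    using continuous_map_funspace[OF c] topspace_odo[of p] by auto
  show "\<exists>M\<ge>1. \<forall>x\<in>odo p. f ((odo_T p ^^ M) x) = (odo_T p ^^ M) (f x)"
    using f by (simp add: aut_inf_def)
qed

lemma inl_transfer:
  fixes G :: "'a monoid" and U :: "'c monoid" and g :: "'a \<Rightarrow> 'c"
  assumes bij: "bij_betw g (carrier G) B"
    and hm: "\<And>x y. x \<in> carrier G \<Longrightarrow> y \<in> carrier G \<Longrightarrow> g (x \<otimes>\<^bsub>G\<^esub> y) = g x \<otimes>\<^bsub>U\<^esub> g y"
    and cl: "\<And>x y. x \<in> carrier G \<Longrightarrow> y \<in> carrier G \<Longrightarrow> x \<otimes>\<^bsub>G\<^esub> y \<in> carrier G"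
  shows "bij_betw (g \<circ> projl) (carrier (inl_grp G :: ('a + 'b) monoid)) B"
    "\<And>x y. x \<in> carrier (inl_grp G :: ('a + 'b) monoid) \<Longrightarrow> y \<in> carrier (inl_grp G) \<Longrightarrow>
        (g \<circ> projl) (x \<otimes>\<^bsub>inl_grp G\<^esub> y) = (g \<circ> projl) x \<otimes>\<^bsub>U\<^esub> (g \<circ> projl) y"
    "\<And>x y. x \<in> carrier (inl_grp G :: ('a + 'b) monoid) \<Longrightarrow> y \<in> carrier (inl_grp G) \<Longrightarrow>
        x \<otimes>\<^bsub>inl_grp G\<^esub> y \<in> carrier (inl_grp G)"
proof -
  have "bij_betw projl (carrier (inl_grp G :: ('a + 'b) monoid)) (carrier G)"
    unfolding inl_grp_def by (auto simp: bij_betw_def inj_on_def image_iff)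
  then show "bij_betw (g \<circ> projl) (carrier (inl_grp G :: ('a + 'b) monoid)) B"
    using bij bij_betw_trans by blast
  show "\<And>x y. x \<in> carrier (inl_grp G :: ('a + 'b) monoid) \<Longrightarrow> y \<in> carrier (inl_grp G) \<Longrightarrow>
        (g \<circ> projl) (x \<otimes>\<^bsub>inl_grp G\<^esub> y) = (g \<circ> projl) x \<otimes>\<^bsub>U\<^esub> (g \<circ> projl) y"
    using hm by (auto simp: inl_grp_def)
  show "\<And>x y. x \<in> carrier (inl_grp G :: ('a + 'b) monoid) \<Longrightarrow> y \<in> carrier (inl_grp G) \<Longrightarrow>
        x \<otimes>\<^bsub>inl_grp G\<^esub> y \<in> carrier (inl_grp G)"
    using cl by (auto simp: inl_grp_def)
qed

lemma inr_transfer: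
  fixes G :: "'b monoid" and U :: "'c monoid" and g :: "'b \<Rightarrow> 'c"
  assumes bij: "bij_betw g (carrier G) B"
    and hm: "\<And>x y. x \<in> carrier G \<Longrightarrow> y \<in> carrier G \<Longrightarrow> g (x \<otimes>\<^bsub>G\<^esub> y) = g x \<otimes>\<^bsub>U\<^esub> g y"
    and cl: "\<And>x y. x \<in> carrier G \<Longrightarrow> y \<in> carrier G \<Longrightarrow> x \<otimes>\<^bsub>G\<^esub> y \<in> carrier G"
  shows "bij_betw (g \<circ> projr) (carrier (inr_grp G :: ('a + 'b) monoid)) B"
    "\<And>x y. x \<in> carrier (inr_grp G :: ('a + 'b) monoid) \<Longrightarrow> y \<in> carrier (inr_grp G) \<Longrightarrow>
        (g \<circ> projr) (x \<otimes>\<^bsub>inr_grp G\<^esub> y) = (g \<circ> projr) x \<otimes>\<^bsub>U\<^esub> (g \<circ> projr) y"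
    "\<And>x y. x \<in> carrier (inr_grp G :: ('a + 'b) monoid) \<Longrightarrow> y \<in> carrier (inr_grp G) \<Longrightarrow>
        x \<otimes>\<^bsub>inr_grp G\<^esub> y \<in> carrier (inr_grp G)"
proof -
  have "bij_betw projr (carrier (inr_grp G :: ('a + 'b) monoid)) (carrier G)"
    unfolding inr_grp_def by (auto simp: bij_betw_def inj_on_def image_iff)
  then show "bij_betw (g \<circ> projr) (carrier (inr_grp G :: ('a + 'b) monoid)) B"
    using bij bij_betw_trans by blast
  show "\<And>x y. x \<in> carrier (inr_grp G :: ('a + 'b) monoid) \<Longrightarrow> y \<in> carrier (inr_grp G) \<Longrightarrow>
        (g \<circ> projr) (x \<otimes>\<^bsub>inr_grp G\<^esub> y) = (g \<circ> projr) x \<otimes>\<^bsub>U\<^esub> (g \<circ> projr) y"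
    using hm by (auto simp: inr_grp_def)
  show "\<And>x y. x \<in> carrier (inr_grp G :: ('a + 'b) monoid) \<Longrightarrow> y \<in> carrier (inr_grp G) \<Longrightarrow>
        x \<otimes>\<^bsub>inr_grp G\<^esub> y \<in> carrier (inr_grp G)"
    using cl by (auto simp: inr_grp_def)
qed


lemma stage0:
  assumes p: "qok p"
  defines "g0 \<equiv> \<lambda>y. lev.Phi p 1 0 p (\<lambda>i\<in>{..<1}. y) id"
  shows "bij_betw g0 (carrier (odo_grp p)) (Hset p 1)"
    "\<And>x y. x \<in> carrier (odo_grp p) \<Longrightarrow> y \<in> carrier (odo_grp p) \<Longrightarrow>
       g0 (x \<otimes>\<^bsub>odo_grp p\<^esub> y) = g0 x \<otimes>\<^bsub>aut_inf p\<^esub> g0 y"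
    "\<And>x y. x \<in> carrier (odo_grp p) \<Longrightarrow> y \<in> carrier (odo_grp p) \<Longrightarrow>
       x \<otimes>\<^bsub>odo_grp p\<^esub> y \<in> carrier (odo_grp p)"
proof -
  interpret L0: lev p 1 0 p by (rule lev0[OF p])
  define e :: "(nat \<Rightarrow> nat) \<Rightarrow> (nat \<Rightarrow> nat \<Rightarrow> nat) \<times> (nat \<Rightarrow> nat)" where
    "e y = ((\<lambda>i\<in>{..<1::nat}. y), id)" for y
  have g0e: "g0 = (\<lambda>(v, \<sigma>). L0.Phi v \<sigma>) \<circ> e" by (simp add: g0_def e_def fun_eq_iff)
  have ecar: "e y \<in> carrier (wr_grp p 1)" if "y \<in> odo p" for y
    unfolding e_def L0.carrW using that by (auto simp: permutes_id)
  have be: "bij_betw e (odo p) (carrier (wr_grp p 1))"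
  proof (rule bij_betw_imageI)
    show "inj_on e (odo p)"
    proof (rule inj_onI)
      fix x y assume "e x = e y"
      then have "fst (e x) 0 = fst (e y) 0" by simp
      then show "x = y" by (simp add: e_def)
    qed
    show "e ` odo p = carrier (wr_grp p 1)"
    proof
      show "e ` odo p \<subseteq> carrier (wr_grp p 1)" using ecar by blast
      show "carrier (wr_grp p 1) \<subseteq> e ` odo p"
      proof
        fix z assume z: "z \<in> carrier (wr_grp p 1)"
        obtain v \<sigma> where vs: "z = (v, \<sigma>)" by (cases z)
        have zc: "(v, \<sigma>) \<in> carrier (wr_grp p 1)" using z vs by simp
        have v: "v \<in> {..<1} \<rightarrow>\<^sub>E odo p" and s: "\<sigma> permutes {..<1}"
          using zc unfolding L0.carrW by auto
        have "\<sigma> = id"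
        proof (rule ext)
          fix a show "\<sigma> a = id a"
          proof (cases "a = 0")
            case True
            then have "\<sigma> a \<in> {..<1}" using permutes_in_image[OF s, of a] by simp
            then show ?thesis using True by simp
          next
            case False then show ?thesis using permutes_not_in[OF s, of a] by simp
          qed
        qed
        moreover have "v = (\<lambda>i\<in>{..<1::nat}. v 0)"
          using v by (auto simp: PiE_iff extensional_def fun_eq_iff)
        moreover have "v 0 \<in> odo p" using v by auto
        ultimately show "z \<in> e ` odo p" unfolding vs e_def by (intro image_eqI[of _ _ "v 0"]) auto
      qed
    qed
  qed
  have "bij_betw ((\<lambda>(v, \<sigma>). L0.Phi v \<sigma>) \<circ> e) (odo p) L0.Hm"
    using bij_betw_trans[OF be L0.Phi_bij] .
  moreover have "L0.Hm = Hset p 1" unfolding Hset_def by (rule L0.Hm_eq)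
  ultimately show "bij_betw g0 (carrier (odo_grp p)) (Hset p 1)"
    by (simp add: g0e odo_grp_def)
  fix x y assume x: "x \<in> carrier (odo_grp p)" and y: "y \<in> carrier (odo_grp p)"
  then have x': "x \<in> odo p" and y': "y \<in> odo p" by (auto simp: odo_grp_def)
  show "x \<otimes>\<^bsub>odo_grp p\<^esub> y \<in> carrier (odo_grp p)"
    using odo_add_mem[OF p x' y'] by (simp add: odo_grp_def)
  have em: "e (odo_add p x y) = e x \<otimes>\<^bsub>wr_grp p 1\<^esub> e y"
    by (simp add: e_def wr_grp_def fun_eq_iff)
  have "g0 (odo_add p x y) = (case e x \<otimes>\<^bsub>wr_grp p 1\<^esub> e y of (u, \<rho>) \<Rightarrow> L0.Phi u \<rho>)"
    using em by (simp add: g0e)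
  also have "\<dots> = compose (odo p) (g0 x) (g0 y)"
    using L0.Phi_mult[of "fst (e x)" "snd (e x)" "fst (e y)" "snd (e y)"] ecar[OF x'] ecar[OF y']
    by (simp add: g0e e_def)
  finally show "g0 (x \<otimes>\<^bsub>odo_grp p\<^esub> y) = g0 x \<otimes>\<^bsub>aut_inf p\<^esub> g0 y"
    by (simp add: odo_grp_def aut_inf_def)
qed

lemma stagek:
  assumes p: "qok p" and k: "0 < k"
  defines "gk \<equiv> \<lambda>(v, \<sigma>). lev.Phi p (p (k - 1)) k (shift_scale p k) v \<sigma>"
  defines "W \<equiv> wr_grp (shift_scale p k) (p (k - 1))"
  shows "bij_betw gk (carrier W) (Hset p (p (k - 1)))"
    "\<And>x y. x \<in> carrier W \<Longrightarrow> y \<in> carrier W \<Longrightarrow> gk (x \<otimes>\<^bsub>W\<^esub> y) = gk x \<otimes>\<^bsub>aut_inf p\<^esub> gk y"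
    "\<And>x y. x \<in> carrier W \<Longrightarrow> y \<in> carrier W \<Longrightarrow> x \<otimes>\<^bsub>W\<^esub> y \<in> carrier W"
proof -
  interpret Lk: lev p "p (k - 1)" k "shift_scale p k" by (rule levk[OF p k])
  have "Lk.Hm = Hset p (p (k - 1))" unfolding Hset_def by (rule Lk.Hm_eq)
  then show "bij_betw gk (carrier W) (Hset p (p (k - 1)))" using Lk.Phi_bij by (simp add: gk_def W_def)
  fix x y assume x: "x \<in> carrier W" and y: "y \<in> carrier W"
  obtain v \<sigma> w \<tau> where xy: "x = (v, \<sigma>)" "y = (w, \<tau>)" by (cases x, cases y) auto
  show "x \<otimes>\<^bsub>W\<^esub> y \<in> carrier W" using Lk.wr_closed x y xy by (simp add: W_def)
  show "gk (x \<otimes>\<^bsub>W\<^esub> y) = gk x \<otimes>\<^bsub>aut_inf p\<^esub> gk y"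
    using Lk.Phi_mult[of v \<sigma> w \<tau>] x y xy by (simp add: gk_def W_def aut_inf_def)
qed


theorem theorem3p5:
  fixes p :: "nat \<Rightarrow> nat"
  assumes "is_scale p"
  shows "\<exists>j. (\<forall>k. j k \<in> hom (seq_grp p k) (seq_grp p (Suc k)) \<and>
                   inj_on (j k) (carrier (seq_grp p k))) \<and>
             aut_inf p \<cong> dirlim (seq_grp p) j"
proof -
  have p: "qok p" using scale_qok[OF assms] .
  define g0 where "g0 = (\<lambda>y. lev.Phi p 1 0 p (\<lambda>i\<in>{..<1}. y) id)"
  define gk where "gk k = (\<lambda>(v, \<sigma>). lev.Phi p (p (k - 1)) k (shift_scale p k) v \<sigma>)" for k
  define \<phi> where "\<phi> k = (if k = 0 then g0 \<circ> projl else gk k \<circ> projr)" for k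
  define mk where "mk k = (if k = 0 then 1 else p (k - 1))" for k
  define H where "H k = Hset p (mk k)" for k
  have S: "bij_betw (\<phi> k) (carrier (seq_grp p k)) (H k) \<and>
      (\<forall>x\<in>carrier (seq_grp p k). \<forall>y\<in>carrier (seq_grp p k).
          \<phi> k (x \<otimes>\<^bsub>seq_grp p k\<^esub> y) = \<phi> k x \<otimes>\<^bsub>aut_inf p\<^esub> \<phi> k y) \<and>
      (\<forall>x\<in>carrier (seq_grp p k). \<forall>y\<in>carrier (seq_grp p k). x \<otimes>\<^bsub>seq_grp p k\<^esub> y \<in> carrier (seq_grp p k))" for k
  proof (cases "k = 0")
    case True
    have s0a: "bij_betw g0 (carrier (odo_grp p)) (Hset p 1)" unfolding g0_def by (rule stage0(1)[OF p])
    have s0b: "\<And>x y. x \<in> carrier (odo_grp p) \<Longrightarrow> y \<in> carrier (odo_grp p) \<Longrightarrow>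
       g0 (x \<otimes>\<^bsub>odo_grp p\<^esub> y) = g0 x \<otimes>\<^bsub>aut_inf p\<^esub> g0 y"
      unfolding g0_def by (rule stage0(2)[OF p])
    note t = inl_transfer[OF s0a, of "aut_inf p", OF s0b stage0(3)[OF p]]
    have e1: "\<phi> k = g0 \<circ> projl" using True by (simp add: \<phi>_def)
    have e2: "H k = Hset p 1" using True by (simp add: H_def mk_def)
    have e3: "seq_grp p k = inl_grp (odo_grp p)" using True by (simp add: seq_grp_def)
    show ?thesis unfolding e1 e2 e3 using t by blast
  next
    case False
    then have k: "0 < k" by simp
    have ska: "bij_betw (gk k) (carrier (wr_grp (shift_scale p k) (p (k - 1)))) (Hset p (p (k - 1)))"
      unfolding gk_def by (rule stagek(1)[OF p k])
    have skb: "\<And>x y. x \<in> carrier (wr_grp (shift_scale p k) (p (k - 1))) \<Longrightarrow>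
        y \<in> carrier (wr_grp (shift_scale p k) (p (k - 1))) \<Longrightarrow>
       gk k (x \<otimes>\<^bsub>wr_grp (shift_scale p k) (p (k - 1))\<^esub> y) = gk k x \<otimes>\<^bsub>aut_inf p\<^esub> gk k y"
      unfolding gk_def by (rule stagek(2)[OF p k])
    note t = inr_transfer[OF ska, of "aut_inf p", OF skb stagek(3)[OF p k]]
    have e1: "\<phi> k = gk k \<circ> projr" using False by (simp add: \<phi>_def)
    have e2: "H k = Hset p (p (k - 1))" using False by (simp add: H_def mk_def)
    have e3: "seq_grp p k = inr_grp (wr_grp (shift_scale p k) (p (k - 1)))" using False by (simp add: seq_grp_def)
    show ?thesis unfolding e1 e2 e3 using t by blast
  qed
  have mono: "H k \<subseteq> H (Suc k)" for k
  proof
    fix f assume f: "f \<in> H k"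
    then have fc: "f \<in> carrier (aut_inf p)"
      and cm: "\<And>x. x \<in> odo p \<Longrightarrow> f ((odo_T p ^^ mk k) x) = (odo_T p ^^ mk k) (f x)"
      by (auto simp: H_def Hset_def)
    have d: "mk k dvd mk (Suc k)"
      using qok_dvd[OF p, of "k - 1" k] by (simp add: mk_def)
    have "\<forall>x\<in>odo p. f ((odo_T p ^^ mk (Suc k)) x) = (odo_T p ^^ mk (Suc k)) (f x)"
      using comm_dvd[where p=p and f=f and a="mk k" and c="mk (Suc k)", OF p aut_props(2)[OF p fc] cm d]
      by blast
    then show "f \<in> H (Suc k)" using fc by (simp add: H_def Hset_def)
  qed
  have cov: "carrier (aut_inf p) = (\<Union>k. H k)"
  proof
    show "(\<Union>k. H k) \<subseteq> carrier (aut_inf p)" by (auto simp: H_def Hset_def)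
    show "carrier (aut_inf p) \<subseteq> (\<Union>k. H k)"
    proof
      fix f assume fc: "f \<in> carrier (aut_inf p)"
      note ap = aut_props[OF p fc]
      obtain M where M: "1 \<le> M" and cm: "\<forall>x\<in>odo p. f ((odo_T p ^^ M) x) = (odo_T p ^^ M) (f x)"
        using ap(3) by blast
      obtain K where K: "\<forall>x\<in>odo p. f ((odo_T p ^^ p K) x) = (odo_T p ^^ p K) (f x)"
        using reduce[OF p ap(1) ap(2) M] cm by blast
      have "f \<in> H (Suc K)" using fc K by (simp add: H_def Hset_def mk_def)
      then show "f \<in> (\<Union>k. H k)" by blast
    qed
  qed
  have main: "(\<forall>k. (\<lambda>k x. inv_into (carrier (seq_grp p (Suc k))) (\<phi> (Suc k)) (\<phi> k x)) k
        \<in> hom (seq_grp p k) (seq_grp p (Suc k)) \<and>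
        inj_on ((\<lambda>k x. inv_into (carrier (seq_grp p (Suc k))) (\<phi> (Suc k)) (\<phi> k x)) k) (carrier (seq_grp p k))) \<and>
      aut_inf p \<cong> dirlim (seq_grp p) (\<lambda>k x. inv_into (carrier (seq_grp p (Suc k))) (\<phi> (Suc k)) (\<phi> k x))"
    by (rule dirlim_iso[of "seq_grp p" \<phi> H "aut_inf p"]) (use S mono cov in blast)+
  then show ?thesis
    by (rule exI[where x="\<lambda>k x. inv_into (carrier (seq_grp p (Suc k))) (\<phi> (Suc k)) (\<phi> k x)"])
qed


end
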